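(* Let $1<p<\infty$, let $A$ be an index set, let $\Gamma$ be a set with weight function $w:\Gamma\to(0,\infty)$, and let $T:m^{p,\infty}(A)\to\ell^{p,\infty}(\Gamma,w)$ be a bounded linear operator. Then $T\chi_{\{\alpha\}}\in m^{p,\infty}(\Gamma,w)$ for all but countably many $\alpha\in A$.
   Context: For a set $\Gamma$ and $w:\Gamma\to(0,\infty)$, let $\mu(\sigma)=\sum_{\gamma\in\sigma}w(\gamma)$ on $\mathcal P(\Gamma)$; $\ell^{p,\infty}(\Gamma,w)$ is the space of functions $f$ on $\Gamma$ with $\|f\|=\sup_{c>0}c\,(\mu\{|f|>c\})^{1/p}<\infty$ (a Banach space under an equivalent norm), and $m^{p,\infty}(\Gamma,w)$ is its closed subspace generated by the characteristic functions $\chi_\sigma$ of sets $\sigma\subseteq\Gamma$ of finite $\mu$-measure. $\ell^{p,\infty}(A)$ and $m^{p,\infty}(A)$ denote these spaces with $w\equiv1$. *)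

theory Defs
  imports "HOL-Analysis.Analysis"
begin

definition wmu :: "('g \<Rightarrow> real) \<Rightarrow> 'g set \<Rightarrow> ennreal" where
  "wmu w S = (\<Sum>\<^sub>\<infinity> x\<in>S. ennreal (w x))"

text \<open>The p-th power of the weak-Lp quasinorm:
  (sup_c c mu{|f|>c}^(1/p))^p = sup_c c^p mu{|f|>c}.\<close>
definition wnorm_p :: "real \<Rightarrow> ('g \<Rightarrow> real) \<Rightarrow> ('g \<Rightarrow> real) \<Rightarrow> ennreal" where
  "wnorm_p p w f = (SUP c\<in>{0<..}. ennreal (c powr p) * wmu w {x. c < \<bar>f x\<bar>})"

definition lpinf :: "real \<Rightarrow> ('g \<Rightarrow> real) \<Rightarrow> ('g \<Rightarrow> real) set" where
  "lpinf p w = {f. wnorm_p p w f < \<infinity>}"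

definition simple_span :: "('g \<Rightarrow> real) \<Rightarrow> ('g \<Rightarrow> real) set" where
  "simple_span w = {g. \<exists>n (c :: nat \<Rightarrow> real) (S :: nat \<Rightarrow> 'g set).
      (\<forall>i<n. wmu w (S i) < \<infinity>) \<and> g = (\<lambda>x. \<Sum>i<n. c i * indicator (S i) x)}"

text \<open>The space m^{p,infinity}(Gamma,w): the closure of that span in l^{p,infinity}(Gamma,w)
  (closure w.r.t. the quasinorm topology, which coincides with the topology of the
  equivalent Banach norm).\<close>
definition mpinf :: "real \<Rightarrow> ('g \<Rightarrow> real) \<Rightarrow> ('g \<Rightarrow> real) set" where
  "mpinf p w = {f \<in> lpinf p w. \<forall>e>0. \<exists>g\<in>simple_span w. wnorm_p p w (\<lambda>x. f x - g x) < ennreal e}"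

text \<open>Bounded linear operator T from a subspace D (with weight v) into l^{p,infinity}(Gamma,w).
  Boundedness ||Tf|| <= K ||f|| is expressed with p-th powers.\<close>
definition bounded_linear_wk ::
  "real \<Rightarrow> ('a \<Rightarrow> real) \<Rightarrow> ('a \<Rightarrow> real) set \<Rightarrow> ('g \<Rightarrow> real) \<Rightarrow> (('a \<Rightarrow> real) \<Rightarrow> ('g \<Rightarrow> real)) \<Rightarrow> bool" where
  "bounded_linear_wk p v D w T \<longleftrightarrow>
     (\<forall>f\<in>D. T f \<in> lpinf p w) \<and>
     (\<forall>f\<in>D. \<forall>g\<in>D. T (\<lambda>x. f x + g x) = (\<lambda>y. T f y + T g y)) \<and>
     (\<forall>f\<in>D. \<forall>c. T (\<lambda>x. c * f x) = (\<lambda>y. c * T f y)) \<and>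
     (\<exists>K\<ge>0. \<forall>f\<in>D. wnorm_p p w (T f) \<le> ennreal (K powr p) * wnorm_p p v f)"

end

theory Submission
  imports Defs
begin


lemma ens_summ: "(f::'b \<Rightarrow> ennreal) summable_on S"
  by (simp add: nonneg_summable_on_complete)

lemma wmu_mono: "A \<subseteq> B \<Longrightarrow> wmu w A \<le> wmu w B"
  unfolding wmu_def by (rule infsum_mono_neutral) (auto simp: ens_summ)

lemma wmu_finite: "finite F \<Longrightarrow> wmu w F = (\<Sum>x\<in>F. ennreal (w x))"
  unfolding wmu_def by simp

lemma wmu_count_finite: "finite F \<Longrightarrow> wmu (\<lambda>_. 1) F = of_nat (card F)"
  unfolding wmu_def by simp

lemma wmu_point: "x \<in> S \<Longrightarrow> ennreal (w x) \<le> wmu w S"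
proof -
  assume "x \<in> S"
  hence "wmu w {x} \<le> wmu w S" by (intro wmu_mono) auto
  thus ?thesis by (simp add: wmu_finite)
qed

lemma wmu_disj_sum:
  assumes "finite A" "\<And>a a'. a\<in>A \<Longrightarrow> a'\<in>A \<Longrightarrow> a\<noteq>a' \<Longrightarrow> B a \<inter> B a' = {}"
  shows "(\<Sum>a\<in>A. wmu w (B a)) = wmu w (\<Union>a\<in>A. B a)"
  unfolding wmu_def by (rule sum_infsum) (use assms in \<open>auto simp: ens_summ\<close>)

lemma wnorm_ge:
  assumes "0 < c"
  shows "ennreal (c powr p) * wmu w {x. c < \<bar>f x\<bar>} \<le> wnorm_p p w f"
  unfolding wnorm_p_def by (rule SUP_upper) (use assms in auto)

lemma wnorm_le:
  assumes "\<And>c. 0 < c \<Longrightarrow> ennreal (c powr p) * wmu w {x. c < \<bar>f x\<bar>} \<le> B"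
  shows "wnorm_p p w f \<le> B"
  unfolding wnorm_p_def by (rule SUP_least) (use assms in auto)

lemma wmu_fin_of_lpinf:
  assumes "f \<in> lpinf p w" "0 < c"
  shows "wmu w {x. c < \<bar>f x\<bar>} < \<infinity>"
proof -
  have "ennreal (c powr p) * wmu w {x. c < \<bar>f x\<bar>} < \<infinity>"
    using wnorm_ge[OF assms(2), of p w f] assms(1) unfolding lpinf_def by auto
  moreover have "ennreal (c powr p) \<noteq> 0" using assms(2) by simp
  ultimately show ?thesis by (auto simp: ennreal_mult_less_top top.not_eq_extremum)
qed

lemma countable_of_wmu_fin:
  assumes pos: "\<forall>x. 0 < w x" and fin: "wmu w S < \<infinity>"
  shows "countable S"
proof (rule ccontr)
  assume unc: "\<not> countable S"
  have "S = (\<Union>n::nat. {x\<in>S. 1 / real (Suc n) < w x})"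
  proof (intro equalityI subsetI)
    fix x assume "x \<in> S"
    obtain n :: nat where "inverse (real (Suc n)) < w x"
      using reals_Archimedean pos by blast
    hence "1 / real (Suc n) < w x" by (simp add: inverse_eq_divide)
    thus "x \<in> (\<Union>n. {x\<in>S. 1 / real (Suc n) < w x})" using \<open>x\<in>S\<close> by auto
  qed auto
  moreover have "\<exists>n. \<not> countable {x\<in>S. 1 / real (Suc n) < w x}"
  proof (rule ccontr)
    assume "\<not> (\<exists>n. \<not> countable {x\<in>S. 1 / real (Suc n) < w x})"
    hence "countable (\<Union>n::nat. {x\<in>S. 1 / real (Suc n) < w x})" by (intro countable_UN) auto
    thus False using unc calculation by simp
  qed
  then obtain n where inf: "\<not> countable {x\<in>S. 1 / real (Suc n) < w x}" by blast
  hence "infinite {x\<in>S. 1 / real (Suc n) < w x}" using countable_finite by blast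
  hence "infsum (\<lambda>x. ennreal (w x)) {x\<in>S. 1 / real (Suc n) < w x} = \<infinity>"
    by (intro infsum_superconst_infinite_ennreal[where b="ennreal (1 / real (Suc n))"]) (auto intro!: ennreal_leI)
  moreover have "wmu w {x\<in>S. 1 / real (Suc n) < w x} \<le> wmu w S" by (intro wmu_mono) auto
  ultimately show False using fin unfolding wmu_def by auto
qed

lemma countable_supp:
  assumes pos: "\<forall>x. 0 < w x" and f: "f \<in> lpinf p w"
  shows "countable {x. f x \<noteq> 0}"
proof -
  have "{x. f x \<noteq> 0} = (\<Union>n::nat. {x. 1 / real (Suc n) < \<bar>f x\<bar>})"
  proof (intro equalityI subsetI)
    fix x assume "x \<in> {x. f x \<noteq> 0}"
    hence "0 < \<bar>f x\<bar>" by simp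
    then obtain n :: nat where "inverse (real (Suc n)) < \<bar>f x\<bar>"
      using reals_Archimedean by blast
    hence "1 / real (Suc n) < \<bar>f x\<bar>" by (simp add: inverse_eq_divide)
    thus "x \<in> (\<Union>n. {x. 1 / real (Suc n) < \<bar>f x\<bar>})" by auto
  qed auto
  moreover have "countable {x. 1 / real (Suc n) < \<bar>f x\<bar>}" for n
    by (rule countable_of_wmu_fin[OF pos wmu_fin_of_lpinf[OF f]]) auto
  ultimately show ?thesis by auto
qed


lemma fin_supp_simple:
  assumes fin: "finite {x. f x \<noteq> 0}"
  shows "f \<in> simple_span v"
proof -
  define M where "M = {x. f x \<noteq> 0}"
  obtain h where h: "bij_betw h {0..<card M} M" using ex_bij_betw_nat_finite fin M_def by blast
  have fx: "f x = (\<Sum>i<card M. f (h i) * indicator {h i} x)" for x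
  proof -
    have "(\<Sum>i<card M. f (h i) * indicator {h i} x) = (\<Sum>y\<in>M. f y * indicator {y} x)"
      using sum.reindex_bij_betw[OF h, of "\<lambda>y. f y * indicator {y} x"] by (simp add: lessThan_atLeast0)
    also have "\<dots> = (\<Sum>y\<in>M. if y = x then f x else 0)"
      by (rule sum.cong) (auto simp: indicator_def)
    also have "\<dots> = f x" using fin unfolding M_def by (auto simp: sum.delta)
    finally show ?thesis by simp
  qed
  moreover have "wmu v {h i} < \<infinity>" for i by (simp add: wmu_finite)
  hence "\<forall>i<card M. wmu v {h i} < \<infinity>" by blast
  moreover have "f = (\<lambda>x. \<Sum>i<card M. f (h i) * indicator {h i} x)" by (rule ext) (rule fx)
  ultimately show ?thesis unfolding simple_span_def
    by (intro CollectI exI[of _ "card M"] exI[of _ "\<lambda>i. f (h i)"] exI[of _ "\<lambda>i. {h i}"] conjI)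
qed

lemma count_norm_le:
  assumes fin: "finite {x. f x \<noteq> 0}"
    and bd: "\<And>t. 0 < t \<Longrightarrow> t powr p * real (card {x. t < \<bar>f x\<bar>}) \<le> B"
  shows "wnorm_p p (\<lambda>_. 1) f \<le> ennreal B"
proof (rule wnorm_le)
  fix c :: real assume c: "0 < c"
  have "finite {x. c < \<bar>f x\<bar>}" by (rule finite_subset[OF _ fin]) (use c in auto)
  hence "ennreal (c powr p) * wmu (\<lambda>_. 1) {x. c < \<bar>f x\<bar>} = ennreal (c powr p * real (card {x. c < \<bar>f x\<bar>}))"
    by (simp add: wmu_count_finite ennreal_mult' ennreal_of_nat_eq_real_of_nat)
  also have "\<dots> \<le> ennreal B" using bd[OF c] by (rule ennreal_leI)
  finally show "ennreal (c powr p) * wmu (\<lambda>_. 1) {x. c < \<bar>f x\<bar>} \<le> ennreal B" .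
qed

lemma fin_supp_mpinf:
  assumes fin: "finite {x. f x \<noteq> 0}" and p: "0 \<le> p"
  shows "f \<in> mpinf p (\<lambda>_. 1)"
proof -
  define M where "M = {x. f x \<noteq> 0}"
  define S where "S = (\<Sum>x\<in>M. \<bar>f x\<bar>)"
  have "wnorm_p p (\<lambda>_. 1) f \<le> ennreal (S powr p * real (card M))"
  proof (rule count_norm_le[OF fin])
    fix t :: real assume t: "0 < t"
    show "t powr p * real (card {x. t < \<bar>f x\<bar>}) \<le> S powr p * real (card M)"
    proof (cases "{x. t < \<bar>f x\<bar>} = {}")
      case True thus ?thesis by (simp add: S_def)
    next
      case False
      then obtain x where x: "t < \<bar>f x\<bar>" by auto
      hence "x \<in> M" using t by (auto simp: M_def)
      hence "\<bar>f x\<bar> \<le> S" unfolding S_def using fin M_def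
        by (intro member_le_sum) auto
      hence "t powr p \<le> S powr p" using x t p by (intro powr_mono2) auto
      moreover have "card {x. t < \<bar>f x\<bar>} \<le> card M"
        using fin t unfolding M_def by (intro card_mono) auto
      ultimately show ?thesis by (intro mult_mono) auto
    qed
  qed
  moreover have "ennreal (S powr p * real (card M)) < \<infinity>" by simp
  ultimately have "wnorm_p p (\<lambda>_. 1) f < \<infinity>" by (rule le_less_trans)
  hence l: "f \<in> lpinf p (\<lambda>_. 1)" unfolding lpinf_def by simp
  have z: "wnorm_p p (\<lambda>_. 1) (\<lambda>x. f x - f x) = 0"
    unfolding wnorm_p_def by (simp add: wmu_finite)
  show ?thesis unfolding mpinf_def
  proof (intro CollectI conjI l allI impI bexI[OF _ fin_supp_simple[OF fin]])
    fix e :: real assume "0 < e"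
    thus "wnorm_p p (\<lambda>_. 1) (\<lambda>x. f x - f x) < ennreal e" unfolding z by simp
  qed
qed


context
  fixes p :: real and w :: "'g \<Rightarrow> real" and T :: "('a \<Rightarrow> real) \<Rightarrow> ('g \<Rightarrow> real)"
  assumes p: "0 \<le> p"
    and blw: "bounded_linear_wk p (\<lambda>_. 1) (mpinf p (\<lambda>_. 1)) w T"
begin

lemma T_lin:
  assumes "finite F"
  shows "T (\<lambda>x. \<Sum>i\<in>F. a i * indicator {b i} x) = (\<lambda>y. \<Sum>i\<in>F. a i * T (indicator {b i}) y)"
  using assms
proof (induction F rule: finite_induct)
  case empty
  have z: "(\<lambda>x::'a. 0::real) \<in> mpinf p (\<lambda>_. 1)" by (rule fin_supp_mpinf[OF _ p]) auto
  have hom: "\<forall>f\<in>mpinf p (\<lambda>_. 1). \<forall>c. T (\<lambda>x. c * f x) = (\<lambda>y. c * T f y)"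
    using blw unfolding bounded_linear_wk_def by blast
  have "T (\<lambda>x. 0 * 0) = (\<lambda>y. 0 * T (\<lambda>x. 0) y)" by (rule bspec[OF hom z, THEN spec[of _ 0]])
  thus ?case by (simp only: mult_zero_left sum.empty)
next
  case (insert i F)
  have fs: "finite {x. (\<Sum>i\<in>F. a i * indicator {b i} x) \<noteq> 0}"
  proof (rule finite_subset[of _ "b ` F"])
    show "{x. (\<Sum>i\<in>F. a i * indicator {b i} x) \<noteq> 0} \<subseteq> b ` F"
    proof
      fix x assume "x \<in> {x. (\<Sum>i\<in>F. a i * indicator {b i} x) \<noteq> 0}"
      hence "(\<Sum>i\<in>F. a i * indicator {b i} x) \<noteq> 0" by simp
      hence "\<exists>j\<in>F. a j * indicator {b j} x \<noteq> 0"
        using sum.neutral[of F "\<lambda>j. a j * indicator {b j} x"] by blast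
      then obtain j where "j \<in> F" "a j * indicator {b j} x \<noteq> 0" by blast
      thus "x \<in> b ` F" by (auto simp: indicator_def split: if_splits)
    qed
  qed (simp add: insert.hyps)
  have m1: "(\<lambda>x. \<Sum>i\<in>F. a i * indicator {b i} x) \<in> mpinf p (\<lambda>_. 1)"
    by (rule fin_supp_mpinf[OF fs p])
  have m2: "(\<lambda>x. a i * indicator {b i} x) \<in> mpinf p (\<lambda>_. 1)"
    by (rule fin_supp_mpinf[OF _ p]) (auto simp: indicator_def)
  have m3: "(indicator {b i} :: 'a \<Rightarrow> real) \<in> mpinf p (\<lambda>_. 1)"
    by (rule fin_supp_mpinf[OF _ p]) (auto simp: indicator_def)
  have addall: "\<forall>f\<in>mpinf p (\<lambda>_. 1). \<forall>g\<in>mpinf p (\<lambda>_. 1). T (\<lambda>x. f x + g x) = (\<lambda>y. T f y + T g y)"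
    and hom: "\<forall>f\<in>mpinf p (\<lambda>_. 1). \<forall>c. T (\<lambda>x. c * f x) = (\<lambda>y. c * T f y)"
    using blw unfolding bounded_linear_wk_def by blast+
  have add: "T (\<lambda>x. (\<lambda>x. a i * indicator {b i} x) x + (\<lambda>x. \<Sum>i\<in>F. a i * indicator {b i} x) x)
     = (\<lambda>y. T (\<lambda>x. a i * indicator {b i} x) y + T (\<lambda>x. \<Sum>i\<in>F. a i * indicator {b i} x) y)"
    by (rule bspec[OF bspec[OF addall m2] m1])
  have sc: "T (\<lambda>x. a i * indicator {b i} x) = (\<lambda>y. a i * T (indicator {b i}) y)"
    by (rule bspec[OF hom m3, THEN spec[of _ "a i"]])
  have e1: "(\<lambda>x. \<Sum>i\<in>insert i F. a i * indicator {b i} x) = (\<lambda>x. a i * indicator {b i} x + (\<Sum>i\<in>F. a i * indicator {b i} x))"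
    by (intro ext) (rule sum.insert[OF insert.hyps])
  have e2: "(\<lambda>y. \<Sum>i\<in>insert i F. a i * T (indicator {b i}) y) = (\<lambda>y. a i * T (indicator {b i}) y + (\<Sum>i\<in>F. a i * T (indicator {b i}) y))"
    by (intro ext) (rule sum.insert[OF insert.hyps])
  have "T (\<lambda>x. \<Sum>i\<in>insert i F. a i * indicator {b i} x) = T (\<lambda>x. a i * indicator {b i} x + (\<Sum>i\<in>F. a i * indicator {b i} x))"
    using e1 by (rule arg_cong[where f=T])
  also have "\<dots> = (\<lambda>y. T (\<lambda>x. a i * indicator {b i} x) y + T (\<lambda>x. \<Sum>i\<in>F. a i * indicator {b i} x) y)"
    by (rule add)
  also have "\<dots> = (\<lambda>y. a i * T (indicator {b i}) y + (\<Sum>i\<in>F. a i * T (indicator {b i}) y))"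
    by (subst sc, subst insert.IH, rule refl)
  also have "\<dots> = (\<lambda>y. \<Sum>i\<in>insert i F. a i * T (indicator {b i}) y)"
    by (rule e2[symmetric])
  finally show ?case .
qed

end


definition lev :: "real \<Rightarrow> ('g \<Rightarrow> real) \<Rightarrow> ('g \<Rightarrow> real) \<Rightarrow> int \<Rightarrow> ennreal" where
  "lev p w g m = ennreal ((2 powr real_of_int m) powr p) * wmu w {x. 2 powr real_of_int m < \<bar>g x\<bar>}"

lemma dyadic:
  assumes "0 < (c::real)"
  obtains m :: int where "2 powr real_of_int m \<le> c" "c < 2 powr real_of_int (m + 1)"
proof -
  define m where "m = \<lfloor>log 2 c\<rfloor>"
  have "2 powr real_of_int m \<le> 2 powr (log 2 c)"
    unfolding m_def by (subst powr_le_cancel_iff) auto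
  moreover have "2 powr (log 2 c) < 2 powr real_of_int (m + 1)"
    unfolding m_def by (subst powr_less_cancel_iff) linarith+
  ultimately show ?thesis using that assms by auto
qed

lemma lev_bound:
  assumes c: "0 < c" and m1: "2 powr real_of_int m \<le> c" and m2: "c < 2 powr real_of_int (m + 1)"
    and p: "0 \<le> p"
  shows "ennreal (c powr p) * wmu w {x. c < \<bar>g x\<bar>} \<le> ennreal (2 powr p) * lev p w g m"
proof -
  have "c powr p \<le> (2 powr real_of_int (m + 1)) powr p"
    using c m2 p by (intro powr_mono2) auto
  also have "2 powr real_of_int (m + 1) = 2 * 2 powr real_of_int m"
    by (simp add: powr_add)
  also have "(2 * 2 powr real_of_int m) powr p = 2 powr p * (2 powr real_of_int m) powr p"
    by (simp add: powr_mult)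
  finally have A: "ennreal (c powr p) \<le> ennreal (2 powr p) * ennreal ((2 powr real_of_int m) powr p)"
    by (simp add: ennreal_mult'[symmetric] ennreal_leI)
  have B: "wmu w {x. c < \<bar>g x\<bar>} \<le> wmu w {x. 2 powr real_of_int m < \<bar>g x\<bar>}"
    using m1 by (intro wmu_mono) auto
  have "ennreal (c powr p) * wmu w {x. c < \<bar>g x\<bar>}
      \<le> (ennreal (2 powr p) * ennreal ((2 powr real_of_int m) powr p)) * wmu w {x. 2 powr real_of_int m < \<bar>g x\<bar>}"
    using A B by (rule mult_mono) auto
  thus ?thesis unfolding lev_def by (simp add: mult.assoc)
qed


lemma char_mpinf:
  assumes pos: "\<forall>x. 0 < w x" and p: "0 \<le> p" and g: "g \<in> lpinf p w"
    and small: "\<And>\<epsilon>. 0 < \<epsilon> \<Longrightarrow> finite {m. ennreal \<epsilon> \<le> lev p w g m}"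
  shows "g \<in> mpinf p w"
  unfolding mpinf_def
proof (intro CollectI conjI g allI impI)
  fix e :: real assume e: "0 < e"
  define \<epsilon> where "\<epsilon> = e / (2 * 2 powr p)"
  have \<epsilon>: "0 < \<epsilon>" using e by (simp add: \<epsilon>_def)
  have e2: "2 powr p * \<epsilon> = e / 2" by (simp add: \<epsilon>_def)
  obtain k where k: "abs ` {m. ennreal \<epsilon> \<le> lev p w g m} \<subseteq> {..<k}"
    using small[OF \<epsilon>] finite_int_iff_bounded by blast
  define M where "M = nat k"
  have levsmall: "lev p w g m < ennreal \<epsilon>" if "int M \<le> \<bar>m\<bar>" for m
  proof (rule ccontr)
    assume "\<not> lev p w g m < ennreal \<epsilon>"
    hence "m \<in> {m. ennreal \<epsilon> \<le> lev p w g m}" by (simp add: not_less)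
    hence "\<bar>m\<bar> \<in> {..<k}" using k by blast
    hence "\<bar>m\<bar> < k" by simp
    thus False using that unfolding M_def by linarith
  qed
  define a :: real where "a = 2 powr (- real M)"
  define b :: real where "b = 2 powr (real M)"
  have a0: "0 < a" by (simp add: a_def)
  have ab: "a \<le> b" unfolding a_def b_def by (subst powr_le_cancel_iff) auto
  define N :: nat where "N = nat \<lceil>b / a\<rceil>"
  define h where "h = (\<lambda>x. if a < \<bar>g x\<bar> \<and> \<bar>g x\<bar> \<le> b then a * of_int \<lfloor>g x / a\<rfloor> else 0)"
  define S where "S = (\<lambda>i::nat. {x. a < \<bar>g x\<bar> \<and> \<bar>g x\<bar> \<le> b \<and> \<lfloor>g x / a\<rfloor> = int i - int N})"
  define cc where "cc = (\<lambda>i::nat. a * (real i - real N))"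
  have hsum: "h x = (\<Sum>i<2*N+1. cc i * indicator (S i) x)" for x
  proof (cases "a < \<bar>g x\<bar> \<and> \<bar>g x\<bar> \<le> b")
    case True
    define kk where "kk = \<lfloor>g x / a\<rfloor>"
    have "\<bar>g x / a\<bar> \<le> b / a" using True a0 by (simp add: abs_divide divide_right_mono)
    also have "\<dots> \<le> real N" unfolding N_def by linarith
    finally have bnd: "\<bar>g x / a\<bar> \<le> real N" .
    have b1: "- real N \<le> g x / a" using abs_le_D2[OF bnd] by linarith
    have b2: "g x / a \<le> real N" using abs_le_D1[OF bnd] by linarith
    have kk1: "- int N \<le> kk" unfolding kk_def using b1 by (simp add: le_floor_iff)
    have "kk \<le> \<lfloor>real N\<rfloor>" unfolding kk_def using b2 by (rule floor_mono)
    hence kk2: "kk \<le> int N" by simp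
    define i0 where "i0 = nat (kk + int N)"
    have i0: "i0 < 2*N+1" "int i0 = kk + int N" using kk1 kk2 unfolding i0_def by auto
    have "(\<Sum>i<2*N+1. cc i * indicator (S i) x) = (\<Sum>i<2*N+1. if i = i0 then cc i0 else 0)"
    proof (rule sum.cong[OF refl])
      fix i assume "i \<in> {..<2*N+1}"
      have "x \<in> S i \<longleftrightarrow> i = i0" unfolding S_def using True i0(2) kk_def by auto
      thus "cc i * indicator (S i) x = (if i = i0 then cc i0 else 0)" by (auto simp: indicator_def)
    qed
    also have "\<dots> = cc i0" using i0(1) by simp
    also have "\<dots> = h x" unfolding cc_def h_def using True i0(2) kk_def by simp
    finally show ?thesis by simp
  next
    case False
    hence "x \<notin> S i" for i unfolding S_def by auto
    hence "(\<Sum>i<2*N+1. cc i * indicator (S i) x) = 0" by (simp add: indicator_def)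
    moreover have "h x = 0" using False unfolding h_def by (simp only: if_False)
    ultimately show ?thesis by simp
  qed
  have Sfin: "wmu w (S i) < \<infinity>" for i
  proof -
    have "wmu w (S i) \<le> wmu w {x. a < \<bar>g x\<bar>}" unfolding S_def by (intro wmu_mono) auto
    also have "\<dots> < \<infinity>" by (rule wmu_fin_of_lpinf[OF g a0])
    finally show ?thesis .
  qed
  have hs: "h \<in> simple_span w"
  proof -
    have "\<forall>i<2*N+1. wmu w (S i) < \<infinity>" using Sfin by blast
    moreover have "h = (\<lambda>x. \<Sum>i<2*N+1. cc i * indicator (S i) x)" by (rule ext) (rule hsum)
    ultimately show ?thesis unfolding simple_span_def
      by (intro CollectI exI[of _ "2*N+1"] exI[of _ cc] exI[of _ S] conjI)
  qed
  have bound: "ennreal (c powr p) * wmu w {x. c < \<bar>g x - h x\<bar>} \<le> ennreal (e / 2)" if c: "0 < c" for c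
  proof -
    obtain m where m1: "2 powr real_of_int m \<le> c" and m2: "c < 2 powr real_of_int (m + 1)"
      using dyadic[OF c] by blast
    have gen: "ennreal (c powr p) * wmu w {x. c < \<bar>g x\<bar>} \<le> ennreal (e / 2)" if mM: "int M \<le> \<bar>m\<bar>"
    proof -
      have "ennreal (c powr p) * wmu w {x. c < \<bar>g x\<bar>} \<le> ennreal (2 powr p) * lev p w g m"
        by (rule lev_bound[OF c m1 m2 p])
      also have "\<dots> \<le> ennreal (2 powr p) * ennreal \<epsilon>"
        using levsmall[OF mM] by (intro mult_left_mono) auto
      also have "\<dots> = ennreal (2 powr p * \<epsilon>)" using \<epsilon> by (simp add: ennreal_mult'[symmetric])
      also have "\<dots> = ennreal (e / 2)" by (simp only: e2)
      finally show ?thesis .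
    qed
    show ?thesis
    proof (cases "c \<le> a")
      case True
      have sub0: "{x. c < \<bar>g x - h x\<bar>} \<subseteq> {x. c < \<bar>g x\<bar>}"
      proof
        fix x assume x: "x \<in> {x. c < \<bar>g x - h x\<bar>}"
        show "x \<in> {x. c < \<bar>g x\<bar>}"
        proof (cases "a < \<bar>g x\<bar> \<and> \<bar>g x\<bar> \<le> b")
          case True
          thus ?thesis using \<open>c \<le> a\<close> by simp
        next
          case F2: False
          hence "h x = 0" unfolding h_def by (simp only: if_False)
          thus ?thesis using x by simp
        qed
      qed
      have "ennreal (c powr p) * wmu w {x. c < \<bar>g x - h x\<bar>} \<le> ennreal (c powr p) * wmu w {x. c < \<bar>g x\<bar>}"
        by (rule mult_left_mono[OF wmu_mono[OF sub0]]) simp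
      also have "\<dots> \<le> ennreal (e / 2)"
      proof (rule gen)
        have "2 powr real_of_int m \<le> 2 powr (- real M)" using m1 True unfolding a_def by linarith
        hence "real_of_int m \<le> - real M" using powr_le_cancel_iff[of 2 "real_of_int m" "- real M"] by simp
        thus "int M \<le> \<bar>m\<bar>" by linarith
      qed
      finally show ?thesis .
    next
      case False
      have sub: "{x. c < \<bar>g x - h x\<bar>} \<subseteq> {x. b < \<bar>g x\<bar> \<and> c < \<bar>g x\<bar>}"
      proof
        fix x assume x: "x \<in> {x. c < \<bar>g x - h x\<bar>}"
        show "x \<in> {x. b < \<bar>g x\<bar> \<and> c < \<bar>g x\<bar>}"
        proof (cases "a < \<bar>g x\<bar> \<and> \<bar>g x\<bar> \<le> b")
          case True
          have "a * of_int \<lfloor>g x / a\<rfloor> \<le> g x"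
            using floor_divide_lower[OF a0, of "g x"] by (simp add: mult.commute)
          moreover have "g x < a * of_int \<lfloor>g x / a\<rfloor> + a"
            using floor_divide_upper[OF a0, of "g x"] by (simp add: distrib_left distrib_right mult.commute)
          moreover have hx: "h x = a * of_int \<lfloor>g x / a\<rfloor>"
            using True unfolding h_def by (simp only: if_True simp_thms)
          ultimately have "0 \<le> g x - h x" "g x - h x < a" by linarith+
          hence lt: "\<bar>g x - h x\<bar> < a" unfolding abs_less_iff by linarith
          have "c < \<bar>g x - h x\<bar>" using x by simp
          hence "c < a" using lt by linarith
          thus ?thesis using False by linarith
        next
          case F2: False
          hence "h x = 0" unfolding h_def by (simp only: if_False)
          hence cg: "c < \<bar>g x\<bar>" using x by simp
          hence "a < \<bar>g x\<bar>" using False by linarith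
          hence "b < \<bar>g x\<bar>" using F2 by (simp add: not_le)
          thus ?thesis using cg by simp
        qed
      qed
      show ?thesis
      proof (cases "c \<le> b")
        case True
        have "ennreal (c powr p) * wmu w {x. c < \<bar>g x - h x\<bar>} \<le> ennreal (b powr p) * wmu w {x. b < \<bar>g x\<bar>}"
        proof (rule mult_mono)
          show "ennreal (c powr p) \<le> ennreal (b powr p)" using True c p by (intro ennreal_leI powr_mono2) auto
          have sub2: "{x. c < \<bar>g x - h x\<bar>} \<subseteq> {x. b < \<bar>g x\<bar>}" using sub by blast
          show "wmu w {x. c < \<bar>g x - h x\<bar>} \<le> wmu w {x. b < \<bar>g x\<bar>}" by (rule wmu_mono[OF sub2])
        qed auto
        also have "\<dots> = lev p w g (int M)" unfolding lev_def b_def by simp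
        also have "\<dots> \<le> ennreal \<epsilon>" using levsmall[of "int M"] by simp
        also have "\<dots> \<le> ennreal (e / 2)" proof (rule ennreal_leI)
          have "1 \<le> 2 powr p" using p by (intro ge_one_powr_ge_zero) auto
          hence "1 * \<epsilon> \<le> 2 powr p * \<epsilon>" using \<epsilon> by (intro mult_right_mono) auto
          thus "\<epsilon> \<le> e / 2" using e2 by simp
        qed
        finally show ?thesis .
      next
        case F3: False
        have sub1: "{x. c < \<bar>g x - h x\<bar>} \<subseteq> {x. c < \<bar>g x\<bar>}" using sub by blast
        have "ennreal (c powr p) * wmu w {x. c < \<bar>g x - h x\<bar>} \<le> ennreal (c powr p) * wmu w {x. c < \<bar>g x\<bar>}"
          by (rule mult_left_mono[OF wmu_mono[OF sub1]]) simp
        also have "\<dots> \<le> ennreal (e / 2)"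
        proof (rule gen)
          have "2 powr real M < 2 powr real_of_int (m + 1)" using m2 F3 unfolding b_def by linarith
          hence "real M < real_of_int (m + 1)" using powr_less_cancel_iff[of 2 "real M" "real_of_int (m + 1)"] by simp
          thus "int M \<le> \<bar>m\<bar>" by linarith
        qed
        finally show ?thesis .
      qed
    qed
  qed
  have "wnorm_p p w (\<lambda>x. g x - h x) \<le> ennreal (e / 2)"
    by (rule wnorm_le) (rule bound)
  also have "\<dots> < ennreal e" using e by (simp add: ennreal_lessI)
  finally show "\<exists>h\<in>simple_span w. wnorm_p p w (\<lambda>x. g x - h x) < ennreal e"
    using hs by blast
qed


lemma sgn_mult_self_real: "sgn (x::real) * x = \<bar>x\<bar>"
  by (simp add: sgn_if)

lemma comb_eval:
  assumes "finite F" "inj_on b F" "i \<in> F"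
  shows "(\<Sum>j\<in>F. a j * indicator {b j} (b i)) = (a i :: real)"
proof -
  have "(\<Sum>j\<in>F. a j * indicator {b j} (b i)) = (\<Sum>j\<in>F. if j = i then a i else 0)"
  proof (rule sum.cong[OF refl])
    fix j assume j: "j \<in> F"
    show "a j * indicator {b j} (b i) = (if j = i then a i else 0)"
    proof (cases "j = i")
      case True thus ?thesis by (simp add: indicator_def)
    next
      case False
      have "b j \<noteq> b i"
      proof
        assume "b j = b i"
        hence "j = i" by (rule inj_onD[OF assms(2) _ j assms(3)])
        thus False using False by simp
      qed
      thus ?thesis using False by (simp add: indicator_def)
    qed
  qed
  also have "\<dots> = a i" using assms(1,3) by (simp only: sum.delta if_True)
  finally show ?thesis .
qed

lemma comb_eval0:
  assumes "x \<notin> b ` F"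
  shows "(\<Sum>j\<in>F. a j * indicator {b j} x) = (0::real)"
proof -
  have "\<forall>j\<in>F. a j * indicator {b j} x = 0"
  proof
    fix j assume "j \<in> F"
    hence "b j \<in> b ` F" by (rule imageI)
    hence "x \<noteq> b j" using assms by blast
    thus "a j * indicator {b j} x = 0" by (simp add: indicator_def)
  qed
  thus ?thesis by (rule sum.neutral)
qed

lemma comb_supp:
  assumes "finite F"
  shows "finite {x. (\<Sum>j\<in>F. a j * indicator {b j} x) \<noteq> (0::real)}"
proof (rule finite_subset[of _ "b ` F"])
  show "{x. (\<Sum>j\<in>F. a j * indicator {b j} x) \<noteq> 0} \<subseteq> b ` F"
  proof
    fix x assume "x \<in> {x. (\<Sum>j\<in>F. a j * indicator {b j} x) \<noteq> 0}"
    hence "(\<Sum>j\<in>F. a j * indicator {b j} x) \<noteq> 0" by simp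
    thus "x \<in> b ` F" using comb_eval0[of x b F a] by blast
  qed
  show "finite (b ` F)" using assms by simp
qed


lemma big_N:
  assumes p: "1 < p" and X: "0 < X"
  shows "\<exists>N::nat. 0 < N \<and> B * real N < (real N) powr p * X"
proof -
  define C where "C = max 0 (B / X)"
  define N :: nat where "N = nat \<lceil>C powr (1 / (p - 1))\<rceil> + 1"
  have N0: "0 < N" unfolding N_def by simp
  have "C powr (1 / (p - 1)) < real N" unfolding N_def by linarith
  hence "(C powr (1 / (p - 1))) powr (p - 1) < (real N) powr (p - 1)"
    using p by (intro powr_less_mono2) auto
  moreover have "(C powr (1 / (p - 1))) powr (p - 1) = C"
  proof -
    have "(C powr (1 / (p - 1))) powr (p - 1) = C powr 1" using p by (simp add: powr_powr)
    also have "\<dots> = C" by (simp add: C_def)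
    finally show ?thesis .
  qed
  ultimately have lt: "C < (real N) powr (p - 1)" by simp
  have "B / X \<le> C" unfolding C_def by simp
  hence "B \<le> C * X" using X by (simp add: divide_le_eq)
  also have "\<dots> < (real N) powr (p - 1) * X" using lt X by simp
  finally have "B * real N < (real N) powr (p - 1) * X * real N" using N0 by simp
  also have "(real N) powr (p - 1) * X * real N = (real N) powr p * X"
  proof -
    have "(real N) powr (p - 1) * real N = (real N) powr (p - 1) * (real N) powr 1" using N0 by simp
    also have "\<dots> = (real N) powr ((p - 1) + 1)" by (rule powr_add[symmetric])
    also have "\<dots> = (real N) powr p" by simp
    finally show ?thesis by (simp add: mult_ac)
  qed
  finally show ?thesis using N0 by blast
qed

lemma geom_bound:
  assumes "2 \<le> (r::real)"
  shows "(\<Sum>d\<le>D. r ^ d) \<le> 2 * r ^ D"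
proof (induction D)
  case 0 thus ?case by simp
next
  case (Suc D)
  have "(\<Sum>d\<le>Suc D. r ^ d) = (\<Sum>d\<le>D. r ^ d) + r ^ Suc D" by simp
  also have "\<dots> \<le> 2 * r ^ D + r ^ Suc D" using Suc by simp
  also have "2 * r ^ D \<le> r ^ Suc D" using assms by (simp add: mult_right_mono)
  hence "2 * r ^ D + r ^ Suc D \<le> 2 * r ^ Suc D" by simp
  finally show ?case .
qed


context
  fixes p :: real and w :: "'g \<Rightarrow> real" and T :: "('a \<Rightarrow> real) \<Rightarrow> ('g \<Rightarrow> real)"
  assumes p1: "1 < p" and pos: "\<forall>x. 0 < w x"
    and blw: "bounded_linear_wk p (\<lambda>_. 1) (mpinf p (\<lambda>_. 1)) w T"
begin

lemma p0: "0 \<le> p" using p1 by simp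

lemma ind_D: "(indicator {\<alpha>} :: 'a \<Rightarrow> real) \<in> mpinf p (\<lambda>_. 1)"
  by (rule fin_supp_mpinf[OF _ p0]) (auto simp: indicator_def)

lemma G_lp: "T (indicator {\<alpha>}) \<in> lpinf p w"
  using blw ind_D unfolding bounded_linear_wk_def by blast

lemma G_supp: "countable {\<gamma>. T (indicator {\<alpha>}) \<gamma> \<noteq> 0}"
  by (rule countable_supp[OF pos G_lp])

lemma Kbound: obtains K where "0 \<le> K"
  "\<And>f. f \<in> mpinf p (\<lambda>_. 1) \<Longrightarrow> wnorm_p p w (T f) \<le> ennreal (K powr p) * wnorm_p p (\<lambda>_. 1) f"
  using blw unfolding bounded_linear_wk_def by blast

lemma Tcomb: "finite F \<Longrightarrow> T (\<lambda>x. \<Sum>i\<in>F. a i * indicator {b i} x) = (\<lambda>y. \<Sum>i\<in>F. a i * T (indicator {b i}) y)"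
  by (rule T_lin[OF p0 blw])

lemma G_col: "countable {\<alpha>. T (indicator {\<alpha>}) \<gamma> \<noteq> 0}"
proof (rule ccontr)
  define G where "G = (\<lambda>\<alpha>. T (indicator {\<alpha>}))"
  assume unc0: "\<not> countable {\<alpha>. T (indicator {\<alpha>}) \<gamma> \<noteq> 0}"
  hence unc: "\<not> countable {\<alpha>. G \<alpha> \<gamma> \<noteq> 0}" unfolding G_def .
  have eq: "{\<alpha>. G \<alpha> \<gamma> \<noteq> 0} = (\<Union>n::nat. {\<alpha>. 1 / real (Suc n) < \<bar>G \<alpha> \<gamma>\<bar>})"
  proof (intro equalityI subsetI)
    fix x assume "x \<in> {\<alpha>. G \<alpha> \<gamma> \<noteq> 0}"
    hence "0 < \<bar>G x \<gamma>\<bar>" by simp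
    then obtain n :: nat where "inverse (real (Suc n)) < \<bar>G x \<gamma>\<bar>"
      using reals_Archimedean by blast
    hence "1 / real (Suc n) < \<bar>G x \<gamma>\<bar>" by (simp add: inverse_eq_divide)
    thus "x \<in> (\<Union>n. {\<alpha>. 1 / real (Suc n) < \<bar>G \<alpha> \<gamma>\<bar>})" by blast
  next
    fix x assume "x \<in> (\<Union>n. {\<alpha>. 1 / real (Suc n) < \<bar>G \<alpha> \<gamma>\<bar>})"
    then obtain n :: nat where "1 / real (Suc n) < \<bar>G x \<gamma>\<bar>" by blast
    moreover have "0 < 1 / real (Suc n)" by simp
    ultimately have "0 < \<bar>G x \<gamma>\<bar>" by linarith
    thus "x \<in> {\<alpha>. G \<alpha> \<gamma> \<noteq> 0}" by simp
  qed
  have "\<exists>n::nat. \<not> countable {\<alpha>. 1 / real (Suc n) < \<bar>G \<alpha> \<gamma>\<bar>}"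
  proof (rule ccontr)
    assume "\<not> (\<exists>n::nat. \<not> countable {\<alpha>. 1 / real (Suc n) < \<bar>G \<alpha> \<gamma>\<bar>})"
    hence "countable (\<Union>n::nat. {\<alpha>. 1 / real (Suc n) < \<bar>G \<alpha> \<gamma>\<bar>})" by (intro countable_UN) auto
    thus False using unc eq by simp
  qed
  then obtain n :: nat where "\<not> countable {\<alpha>. 1 / real (Suc n) < \<bar>G \<alpha> \<gamma>\<bar>}" by blast
  hence inf: "infinite {\<alpha>. 1 / real (Suc n) < \<bar>G \<alpha> \<gamma>\<bar>}" using countable_finite by blast
  define \<eta> where "\<eta> = 1 / real (Suc n)"
  have \<eta>0: "0 < \<eta>" by (simp add: \<eta>_def)
  obtain K where K0: "0 \<le> K"
    and K: "\<And>f. f \<in> mpinf p (\<lambda>_. 1) \<Longrightarrow> wnorm_p p w (T f) \<le> ennreal (K powr p) * wnorm_p p (\<lambda>_. 1) f"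
    using Kbound by blast
  define X where "X = (\<eta> / 2) powr p * w \<gamma>"
  have X0: "0 < X" unfolding X_def using \<eta>0 pos by simp
  obtain N :: nat where N0: "0 < N" and NB: "K powr p * real N < (real N) powr p * X"
    using big_N[OF p1 X0] by blast
  obtain F where F: "F \<subseteq> {\<alpha>. 1 / real (Suc n) < \<bar>G \<alpha> \<gamma>\<bar>}" "finite F" "card F = N"
    using infinite_arbitrarily_large[OF inf] by blast
  define f where "f = (\<lambda>x. \<Sum>\<alpha>\<in>F. sgn (G \<alpha> \<gamma>) * indicator {\<alpha>} x)"
  have fsupp: "finite {x. f x \<noteq> 0}" unfolding f_def
    using comb_supp[OF F(2), of "\<lambda>\<alpha>. sgn (G \<alpha> \<gamma>)" "\<lambda>\<alpha>. \<alpha>"] by simp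
  have fD: "f \<in> mpinf p (\<lambda>_. 1)" by (rule fin_supp_mpinf[OF fsupp p0])
  have Tf: "T f = (\<lambda>y. \<Sum>\<alpha>\<in>F. sgn (G \<alpha> \<gamma>) * G \<alpha> y)"
    unfolding f_def G_def using Tcomb[OF F(2), of "\<lambda>\<alpha>. sgn (T (indicator {\<alpha>}) \<gamma>)" "\<lambda>\<alpha>. \<alpha>"] by simp
  have "T f \<gamma> = (\<Sum>\<alpha>\<in>F. \<bar>G \<alpha> \<gamma>\<bar>)" unfolding Tf by (simp add: sgn_mult_self_real)
  also have "\<dots> \<ge> (\<Sum>\<alpha>\<in>F. \<eta>)"
    using F(1) unfolding \<eta>_def by (intro sum_mono) auto
  finally have Tfg: "real N * \<eta> \<le> T f \<gamma>" using F(3) by simp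
  have c0: "0 < real N * \<eta> / 2" using N0 \<eta>0 by simp
  have "\<gamma> \<in> {y. real N * \<eta> / 2 < \<bar>T f y\<bar>}" using Tfg c0 by simp
  hence "ennreal ((real N * \<eta> / 2) powr p) * ennreal (w \<gamma>) \<le> ennreal ((real N * \<eta> / 2) powr p) * wmu w {y. real N * \<eta> / 2 < \<bar>T f y\<bar>}"
    by (intro mult_left_mono wmu_point) auto
  also have "\<dots> \<le> wnorm_p p w (T f)" by (rule wnorm_ge[OF c0])
  also have "\<dots> \<le> ennreal (K powr p) * wnorm_p p (\<lambda>_. 1) f" by (rule K[OF fD])
  also have "wnorm_p p (\<lambda>_. 1) f \<le> ennreal (real N)"
  proof (rule count_norm_le[OF fsupp])
    fix t :: real assume t: "0 < t"
    have fx: "\<bar>f x\<bar> \<le> 1" for x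
    proof (cases "x \<in> F")
      case True
      have "f x = sgn (G x \<gamma>)" unfolding f_def using comb_eval[OF F(2) _ True, of "\<lambda>\<alpha>. \<alpha>"] by simp
      thus ?thesis by (simp add: sgn_if)
    next
      case False
      hence "x \<notin> (\<lambda>\<alpha>. \<alpha>) ` F" by simp
      hence "f x = 0" unfolding f_def by (rule comb_eval0)
      thus ?thesis by simp
    qed
    show "t powr p * real (card {x. t < \<bar>f x\<bar>}) \<le> real N"
    proof (cases "t < 1")
      case True
      have sub: "{x. t < \<bar>f x\<bar>} \<subseteq> F"
      proof
        fix x assume "x \<in> {x. t < \<bar>f x\<bar>}"
        hence "f x \<noteq> 0" using t by auto
        show "x \<in> F"
        proof (rule ccontr)
          assume "x \<notin> F"
          hence "x \<notin> (\<lambda>\<alpha>. \<alpha>) ` F" by simp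
          hence "f x = 0" unfolding f_def by (rule comb_eval0)
          thus False using \<open>f x \<noteq> 0\<close> by simp
        qed
      qed
      have "card {x. t < \<bar>f x\<bar>} \<le> N" using card_mono[OF F(2) sub] F(3) by simp
      moreover have "t powr p \<le> 1" using t True p0 by (simp add: powr_le1)
      ultimately have "t powr p * real (card {x. t < \<bar>f x\<bar>}) \<le> 1 * real N"
        by (intro mult_mono) auto
      thus ?thesis by simp
    next
      case False
      hence "{x. t < \<bar>f x\<bar>} = {}" using fx by (auto simp: not_less intro: order_trans)
      thus ?thesis by simp
    qed
  qed
  hence "ennreal (K powr p) * wnorm_p p (\<lambda>_. 1) f \<le> ennreal (K powr p) * ennreal (real N)"
    by (rule mult_left_mono) simp
  finally have "ennreal ((real N * \<eta> / 2) powr p * w \<gamma>) \<le> ennreal (K powr p * real N)"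
    using pos by (simp add: ennreal_mult'[symmetric] ennreal_mult''[symmetric])
  hence le: "(real N * \<eta> / 2) powr p * w \<gamma> \<le> K powr p * real N"
    using K0 by (subst (asm) ennreal_le_iff) auto
  have "(real N * \<eta> / 2) powr p * w \<gamma> = (real N) powr p * X"
    unfolding X_def using \<eta>0 by (simp add: powr_mult[symmetric] mult_ac)
  thus False using le NB by simp
qed

end


lemma select:
  fixes G :: "'a \<Rightarrow> 'g \<Rightarrow> real" and B :: "'s \<Rightarrow> 'a set"
  assumes fin: "finite S" and unc: "\<forall>s\<in>S. \<not> countable (B s)"
    and H: "\<And>F. finite F \<Longrightarrow> countable {\<beta>. \<exists>\<alpha>\<in>F. \<exists>\<gamma>. G \<alpha> \<gamma> \<noteq> 0 \<and> G \<beta> \<gamma> \<noteq> 0}"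
  shows "\<exists>\<alpha>. (\<forall>s\<in>S. \<alpha> s \<in> B s) \<and> inj_on \<alpha> S \<and>
           (\<forall>s\<in>S. \<forall>s'\<in>S. s \<noteq> s' \<longrightarrow> (\<forall>\<gamma>. G (\<alpha> s) \<gamma> = 0 \<or> G (\<alpha> s') \<gamma> = 0))"
  using fin unc
proof (induction S rule: finite_induct)
  case empty thus ?case by simp
next
  case (insert s S)
  from insert.IH insert.prems obtain \<alpha> where
    A1: "\<forall>s\<in>S. \<alpha> s \<in> B s" and A2: "inj_on \<alpha> S" and
    A3: "\<forall>s\<in>S. \<forall>s'\<in>S. s \<noteq> s' \<longrightarrow> (\<forall>\<gamma>. G (\<alpha> s) \<gamma> = 0 \<or> G (\<alpha> s') \<gamma> = 0)"
    by auto
  define X where "X = {\<beta>. \<exists>\<alpha>'\<in>\<alpha> ` S. \<exists>\<gamma>. G \<alpha>' \<gamma> \<noteq> 0 \<and> G \<beta> \<gamma> \<noteq> 0} \<union> \<alpha> ` S"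
  have "countable X" unfolding X_def using H[of "\<alpha> ` S"] insert.hyps(1)
    by (simp add: countable_finite)
  moreover have "\<not> countable (B s)" using insert.prems by simp
  ultimately have "\<not> B s \<subseteq> X" using countable_subset by blast
  then obtain \<beta> where \<beta>: "\<beta> \<in> B s" "\<beta> \<notin> X" by blast
  define \<alpha>' where "\<alpha>' = \<alpha>(s := \<beta>)"
  have a': "\<alpha>' s' = \<alpha> s'" if "s' \<in> S" for s' using that insert.hyps(2) unfolding \<alpha>'_def by auto
  have a's: "\<alpha>' s = \<beta>" unfolding \<alpha>'_def by simp
  have "\<forall>s'\<in>insert s S. \<alpha>' s' \<in> B s'" using A1 a' a's \<beta>(1) by auto
  moreover have "inj_on \<alpha>' (insert s S)"
  proof -
    have "inj_on \<alpha>' S" using A2 a' by (simp add: inj_on_def)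
    moreover have "\<alpha>' s \<notin> \<alpha>' ` S" using \<beta>(2) a' a's unfolding X_def by auto
    moreover have "S - {s} = S" using insert.hyps(2) by simp
    ultimately show ?thesis by simp
  qed
  moreover have "\<forall>s1\<in>insert s S. \<forall>s2\<in>insert s S. s1 \<noteq> s2 \<longrightarrow> (\<forall>\<gamma>. G (\<alpha>' s1) \<gamma> = 0 \<or> G (\<alpha>' s2) \<gamma> = 0)"
  proof (intro ballI impI allI)
    fix s1 s2 \<gamma> assume s1: "s1 \<in> insert s S" and s2: "s2 \<in> insert s S" and ne: "s1 \<noteq> s2"
    have key: "G (\<alpha> s3) \<gamma> = 0 \<or> G \<beta> \<gamma> = 0" if "s3 \<in> S" for s3
      using \<beta>(2) that unfolding X_def by blast
    show "G (\<alpha>' s1) \<gamma> = 0 \<or> G (\<alpha>' s2) \<gamma> = 0"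
    proof (cases "s1 = s")
      case True
      hence "s2 \<in> S" using s2 ne by simp
      thus ?thesis using key[of s2] True a' a's by auto
    next
      case F1: False
      hence s1S: "s1 \<in> S" using s1 by simp
      show ?thesis
      proof (cases "s2 = s")
        case True thus ?thesis using key[OF s1S] a'[OF s1S] a's by auto
      next
        case False
        hence "s2 \<in> S" using s2 by simp
        thus ?thesis using A3 s1S ne a' by metis
      qed
    qed
  qed
  ultimately show ?case by blast
qed

lemma count_bound:
  fixes Zt :: "int set" and m0 :: int and p t :: real
  assumes fin: "finite Zt" and p: "1 \<le> p" and t: "0 < t"
    and Zt: "\<And>m. m \<in> Zt \<Longrightarrow> m0 \<le> m \<and> t < 2 powr (- real_of_int (m - m0))"
  shows "t powr p * real (\<Sum>m\<in>Zt. nat \<lceil>2 powr (real_of_int (m - m0) * p)\<rceil>) \<le> 4"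
proof (cases "Zt = {}")
  case True thus ?thesis by simp
next
  case False
  define r where "r = 2 powr p"
  have r2: "2 \<le> r"
  proof -
    have "2 powr 1 \<le> 2 powr p" using p by (subst powr_le_cancel_iff) auto
    thus ?thesis unfolding r_def by simp
  qed
  have pw: "2 powr (real d * p) = r ^ d" for d :: nat
  proof -
    have "r ^ d = r powr real d" unfolding r_def by (simp add: powr_realpow)
    also have "\<dots> = 2 powr (real d * p)" unfolding r_def by (simp add: powr_powr mult.commute)
    finally show ?thesis by simp
  qed
  define D where "D = Max ((\<lambda>m. nat (m - m0)) ` Zt)"
  have "D \<in> (\<lambda>m. nat (m - m0)) ` Zt" unfolding D_def using fin False by (intro Max_in) auto
  then obtain mD where mDa: "D = nat (mD - m0)" and mDb: "mD \<in> Zt" by (rule imageE)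
  have mD: "mD \<in> Zt" "nat (mD - m0) = D" using mDa mDb by simp_all
  have dle: "nat (m - m0) \<le> D" if "m \<in> Zt" for m
    unfolding D_def using fin that by (intro Max_ge) auto
  have t1: "t < 2 powr (- real_of_int (mD - m0))" using Zt[OF mD(1)] by simp
  have iD: "int D = mD - m0" using Zt[OF mD(1)] mD(2) by auto
  have "real D = real_of_int (int D)" by simp
  hence "real_of_int (mD - m0) = real D" unfolding iD by simp
  hence tD: "t < 2 powr (- real D)" using t1 by simp
  have tp: "t powr p \<le> 2 powr (- (real D * p))"
  proof -
    have "t powr p \<le> (2 powr (- real D)) powr p" using tD t p by (intro powr_mono2) auto
    also have "\<dots> = 2 powr (- (real D * p))" by (simp add: powr_powr)
    finally show ?thesis .
  qed
  have nn: "real (nat \<lceil>2 powr (real_of_int (m - m0) * p)\<rceil>) \<le> 2 * r ^ nat (m - m0)" if "m \<in> Zt" for m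
  proof -
    have rr: "real_of_int (m - m0) = real (nat (m - m0))" using Zt[OF that] by simp
    have e: "2 powr (real_of_int (m - m0) * p) = r ^ nat (m - m0)" unfolding rr by (rule pw)
    define y where "y = r ^ nat (m - m0)"
    have y1: "1 \<le> y" unfolding y_def using r2 by (intro one_le_power) simp
    have c1: "real_of_int \<lceil>y\<rceil> \<le> y + 1" using ceiling_correct[of y] by linarith
    have c2: "y \<le> real_of_int \<lceil>y\<rceil>" by (rule le_of_int_ceiling)
    have "real (nat \<lceil>y\<rceil>) = real_of_int \<lceil>y\<rceil>" using c2 y1 by simp
    hence "real (nat \<lceil>y\<rceil>) \<le> 2 * y" using c1 y1 by linarith
    thus ?thesis unfolding e y_def .
  qed
  have "real (\<Sum>m\<in>Zt. nat \<lceil>2 powr (real_of_int (m - m0) * p)\<rceil>) = (\<Sum>m\<in>Zt. real (nat \<lceil>2 powr (real_of_int (m - m0) * p)\<rceil>))"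
    by simp
  also have "\<dots> \<le> (\<Sum>m\<in>Zt. 2 * r ^ nat (m - m0))" by (rule sum_mono) (rule nn)
  also have "\<dots> = 2 * (\<Sum>m\<in>Zt. r ^ nat (m - m0))" by (simp add: sum_distrib_left)
  also have "(\<Sum>m\<in>Zt. r ^ nat (m - m0)) = (\<Sum>d\<in>(\<lambda>m. nat (m - m0)) ` Zt. r ^ d)"
  proof -
    have "inj_on (\<lambda>m. nat (m - m0)) Zt"
    proof (rule inj_onI)
      fix x y assume "x \<in> Zt" "y \<in> Zt" "nat (x - m0) = nat (y - m0)"
      moreover have "m0 \<le> x" "m0 \<le> y" using Zt calculation(1,2) by blast+
      ultimately show "x = y" by simp
    qed
    thus ?thesis by (simp add: sum.reindex)
  qed
  also have "\<dots> \<le> (\<Sum>d\<le>D. r ^ d)"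
    by (rule sum_mono2) (use dle r2 in auto)
  also have "\<dots> \<le> 2 * r ^ D" by (rule geom_bound[OF r2])
  finally have cb: "real (\<Sum>m\<in>Zt. nat \<lceil>2 powr (real_of_int (m - m0) * p)\<rceil>) \<le> 4 * r ^ D" by simp
  have "t powr p * real (\<Sum>m\<in>Zt. nat \<lceil>2 powr (real_of_int (m - m0) * p)\<rceil>) \<le> 2 powr (- (real D * p)) * (4 * r ^ D)"
    by (rule mult_mono[OF tp cb]) (simp, rule of_nat_0_le_iff)
  also have "2 powr (- (real D * p)) * r ^ D = 1"
    unfolding pw[symmetric] by (simp add: powr_add[symmetric])
  hence "2 powr (- (real D * p)) * (4 * r ^ D) = 4" by (simp add: mult_ac)
  finally show ?thesis .
qed


context
  fixes p :: real and w :: "'g \<Rightarrow> real" and T :: "('a \<Rightarrow> real) \<Rightarrow> ('g \<Rightarrow> real)"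
  assumes p1: "1 < p" and pos: "\<forall>x. 0 < w x"
    and blw: "bounded_linear_wk p (\<lambda>_. 1) (mpinf p (\<lambda>_. 1)) w T"
begin

lemma main_thm: "countable {\<alpha>. T (indicator {\<alpha>}) \<notin> mpinf p w}"
proof (rule ccontr)
  define G where "G = (\<lambda>\<alpha>. T (indicator {\<alpha>}))"
  have p0: "0 \<le> p" using p1 by simp
  assume "\<not> countable {\<alpha>. T (indicator {\<alpha>}) \<notin> mpinf p w}"
  hence uncB: "\<not> countable {\<alpha>. G \<alpha> \<notin> mpinf p w}" unfolding G_def .
  define U where "U = (\<lambda>n::nat. {\<alpha>. infinite {m. ennreal (1 / real (Suc n)) \<le> lev p w (G \<alpha>) m}})"
  have subU: "{\<alpha>. G \<alpha> \<notin> mpinf p w} \<subseteq> (\<Union>n. U n)"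
  proof
    fix \<alpha> assume "\<alpha> \<in> {\<alpha>. G \<alpha> \<notin> mpinf p w}"
    hence nm: "G \<alpha> \<notin> mpinf p w" by simp
    have "\<exists>\<epsilon>>0. infinite {m. ennreal \<epsilon> \<le> lev p w (G \<alpha>) m}"
    proof (rule ccontr)
      assume "\<not> (\<exists>\<epsilon>>0. infinite {m. ennreal \<epsilon> \<le> lev p w (G \<alpha>) m})"
      hence "\<And>\<epsilon>. 0 < \<epsilon> \<Longrightarrow> finite {m. ennreal \<epsilon> \<le> lev p w (G \<alpha>) m}" by blast
      hence "G \<alpha> \<in> mpinf p w"
        using char_mpinf[OF pos p0 G_lp[OF p1 pos blw, of \<alpha>]] unfolding G_def by blast
      thus False using nm by simp
    qed
    then obtain \<epsilon> where \<epsilon>: "0 < \<epsilon>" "infinite {m. ennreal \<epsilon> \<le> lev p w (G \<alpha>) m}" by blast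
    obtain n :: nat where "inverse (real (Suc n)) < \<epsilon>" using reals_Archimedean[OF \<epsilon>(1)] by blast
    hence n: "1 / real (Suc n) \<le> \<epsilon>" by (simp add: inverse_eq_divide)
    have "{m. ennreal \<epsilon> \<le> lev p w (G \<alpha>) m} \<subseteq> {m. ennreal (1 / real (Suc n)) \<le> lev p w (G \<alpha>) m}"
    proof
      fix m assume "m \<in> {m. ennreal \<epsilon> \<le> lev p w (G \<alpha>) m}"
      hence "ennreal \<epsilon> \<le> lev p w (G \<alpha>) m" by simp
      moreover have "ennreal (1 / real (Suc n)) \<le> ennreal \<epsilon>" using n by (rule ennreal_leI)
      ultimately show "m \<in> {m. ennreal (1 / real (Suc n)) \<le> lev p w (G \<alpha>) m}" by simp
    qed
    hence "infinite {m. ennreal (1 / real (Suc n)) \<le> lev p w (G \<alpha>) m}"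
      using \<epsilon>(2) finite_subset by blast
    hence "\<alpha> \<in> U n" unfolding U_def by simp
    thus "\<alpha> \<in> (\<Union>n. U n)" by blast
  qed
  have "\<exists>n. \<not> countable (U n)"
  proof (rule ccontr)
    assume "\<not> (\<exists>n. \<not> countable (U n))"
    hence "countable (\<Union>n. U n)" by (intro countable_UN) auto
    hence "countable {\<alpha>. G \<alpha> \<notin> mpinf p w}" using subU countable_subset by blast
    thus False using uncB by simp
  qed
  then obtain n where uncU: "\<not> countable (U n)" by blast
  define \<epsilon> where "\<epsilon> = 1 / real (Suc n)"
  have \<epsilon>0: "0 < \<epsilon>" unfolding \<epsilon>_def by simp
  define Bm where "Bm = (\<lambda>m. {\<alpha> \<in> U n. ennreal \<epsilon> \<le> lev p w (G \<alpha>) m})"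
  define Z where "Z = {m. \<not> countable (Bm m)}"
  have infZ: "infinite Z"
  proof
    assume finZ: "finite Z"
    have "U n \<subseteq> (\<Union>m\<in>-Z. Bm m)"
    proof
      fix \<alpha> assume a: "\<alpha> \<in> U n"
      hence inf: "infinite {m. ennreal \<epsilon> \<le> lev p w (G \<alpha>) m}" unfolding U_def \<epsilon>_def by simp
      have "\<not> {m. ennreal \<epsilon> \<le> lev p w (G \<alpha>) m} \<subseteq> Z" using inf finZ finite_subset by blast
      then obtain m where m: "ennreal \<epsilon> \<le> lev p w (G \<alpha>) m" "m \<notin> Z" by blast
      hence "\<alpha> \<in> Bm m" unfolding Bm_def using a by simp
      thus "\<alpha> \<in> (\<Union>m\<in>-Z. Bm m)" using m(2) by blast
    qed
    moreover have "countable (\<Union>m\<in>-Z. Bm m)"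
    proof (rule countable_UN)
      show "countable (- Z)" by (rule countable_subset[OF subset_UNIV countableI_type])
      fix m assume "m \<in> - Z"
      thus "countable (Bm m)" unfolding Z_def by simp
    qed
    ultimately show False using uncU countable_subset by blast
  qed
  obtain K where K0: "0 \<le> K"
    and K: "\<And>f. f \<in> mpinf p (\<lambda>_. 1) \<Longrightarrow> wnorm_p p w (T f) \<le> ennreal (K powr p) * wnorm_p p (\<lambda>_. 1) f"
    using Kbound[OF p1 pos blw] by blast
  obtain L :: nat where L: "4 * K powr p / \<epsilon> < real L" using reals_Archimedean2 by blast
  have LK: "4 * K powr p < real L * \<epsilon>" using L \<epsilon>0 by (simp add: divide_less_eq)
  have L0: "0 < L"
  proof -
    have "0 \<le> 4 * K powr p" by simp
    hence "0 < real L * \<epsilon>" using LK by linarith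
    thus ?thesis using \<epsilon>0 by (simp add: zero_less_mult_iff)
  qed
  obtain Zs where Zs: "Zs \<subseteq> Z" "finite Zs" "card Zs = L"
    using infinite_arbitrarily_large[OF infZ] by blast
  have Zsne: "Zs \<noteq> {}" using Zs(3) L0 by auto
  define m0 where "m0 = Min Zs"
  have m0le: "m0 \<le> m" if "m \<in> Zs" for m unfolding m0_def using Zs(2) that by simp
  define nn where "nn = (\<lambda>m::int. nat \<lceil>2 powr (real_of_int (m - m0) * p)\<rceil>)"
  define Slots where "Slots = Sigma Zs (\<lambda>m. {..<nn m})"
  have finS: "finite Slots" unfolding Slots_def using Zs(2) by simp
  have H: "countable {\<beta>. \<exists>\<alpha>\<in>F. \<exists>\<gamma>. G \<alpha> \<gamma> \<noteq> 0 \<and> G \<beta> \<gamma> \<noteq> 0}" if "finite F" for F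
  proof -
    have "{\<beta>. \<exists>\<alpha>\<in>F. \<exists>\<gamma>. G \<alpha> \<gamma> \<noteq> 0 \<and> G \<beta> \<gamma> \<noteq> 0} = (\<Union>\<alpha>\<in>F. \<Union>\<gamma>\<in>{\<gamma>. G \<alpha> \<gamma> \<noteq> 0}. {\<beta>. G \<beta> \<gamma> \<noteq> 0})"
      by blast
    moreover have "countable (\<Union>\<alpha>\<in>F. \<Union>\<gamma>\<in>{\<gamma>. G \<alpha> \<gamma> \<noteq> 0}. {\<beta>. G \<beta> \<gamma> \<noteq> 0})"
    proof (intro countable_UN)
      show "countable F" using that by (rule countable_finite)
      fix \<alpha> show "countable {\<gamma>. G \<alpha> \<gamma> \<noteq> 0}" unfolding G_def by (rule G_supp[OF p1 pos blw])
      fix \<gamma> show "countable {\<beta>. G \<beta> \<gamma> \<noteq> 0}" unfolding G_def by (rule G_col[OF p1 pos blw])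
    qed
    ultimately show ?thesis by simp
  qed
  have uncS: "\<forall>s\<in>Slots. \<not> countable (Bm (fst s))"
  proof
    fix s assume "s \<in> Slots"
    hence "fst s \<in> Z" using Zs(1) unfolding Slots_def by auto
    thus "\<not> countable (Bm (fst s))" unfolding Z_def by simp
  qed
  obtain \<alpha> where \<alpha>1: "\<forall>s\<in>Slots. \<alpha> s \<in> Bm (fst s)" and \<alpha>2: "inj_on \<alpha> Slots"
    and \<alpha>3: "\<forall>s\<in>Slots. \<forall>s'\<in>Slots. s \<noteq> s' \<longrightarrow> (\<forall>\<gamma>. G (\<alpha> s) \<gamma> = 0 \<or> G (\<alpha> s') \<gamma> = 0)"
    using select[OF finS uncS, of G] H by blast
  define coef where "coef = (\<lambda>s::int \<times> nat. 2 powr (- real_of_int (fst s - m0)))"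
  define f where "f = (\<lambda>x. \<Sum>s\<in>Slots. coef s * indicator {\<alpha> s} x)"
  have fsupp: "finite {x. f x \<noteq> 0}" unfolding f_def by (rule comb_supp[OF finS])
  have fD: "f \<in> mpinf p (\<lambda>_. 1)" by (rule fin_supp_mpinf[OF fsupp p0])
  have Tf: "T f = (\<lambda>y. \<Sum>s\<in>Slots. coef s * G (\<alpha> s) y)"
    unfolding f_def G_def by (rule Tcomb[OF p1 pos blw finS])
  define c0 where "c0 = 2 powr real_of_int m0"
  have c00: "0 < c0" unfolding c0_def by simp
  have coefm: "coef s * 2 powr real_of_int (fst s) = c0" for s
  proof -
    have "coef s * 2 powr real_of_int (fst s) = 2 powr (- real_of_int (fst s - m0) + real_of_int (fst s))"
      unfolding coef_def by (rule powr_add[symmetric])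
    also have "- real_of_int (fst s - m0) + real_of_int (fst s) = real_of_int m0" by simp
    finally show ?thesis unfolding c0_def .
  qed
  define A where "A = (\<lambda>s. {y. 2 powr real_of_int (fst s) < \<bar>G (\<alpha> s) y\<bar>})"
  have Tf_eval: "T f y = coef s * G (\<alpha> s) y" if s: "s \<in> Slots" and ne: "G (\<alpha> s) y \<noteq> 0" for s y
  proof -
    have "T f y = (\<Sum>s'\<in>Slots. if s' = s then coef s * G (\<alpha> s) y else 0)"
      unfolding Tf
    proof (rule sum.cong[OF refl])
      fix s' assume s': "s' \<in> Slots"
      show "coef s' * G (\<alpha> s') y = (if s' = s then coef s * G (\<alpha> s) y else 0)"
      proof (cases "s' = s")
        case False
        hence "G (\<alpha> s') y = 0" using \<alpha>3 s s' ne by blast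
        thus ?thesis using False by simp
      qed simp
    qed
    also have "\<dots> = coef s * G (\<alpha> s) y" using finS s by simp
    finally show ?thesis .
  qed
  have Asub: "A s \<subseteq> {y. c0 < \<bar>T f y\<bar>}" if s: "s \<in> Slots" for s
  proof
    fix y assume "y \<in> A s"
    hence y: "2 powr real_of_int (fst s) < \<bar>G (\<alpha> s) y\<bar>" unfolding A_def by simp
    have "0 < 2 powr real_of_int (fst s)" by simp
    hence ne: "G (\<alpha> s) y \<noteq> 0" using y by auto
    have cpos: "0 < coef s" unfolding coef_def by simp
    have "c0 = coef s * 2 powr real_of_int (fst s)" using coefm by simp
    also have "\<dots> < coef s * \<bar>G (\<alpha> s) y\<bar>" using y cpos by simp
    also have "\<dots> = \<bar>T f y\<bar>" using Tf_eval[OF s ne] cpos by (simp add: abs_mult)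
    finally show "y \<in> {y. c0 < \<bar>T f y\<bar>}" by simp
  qed
  have Adisj: "A s \<inter> A s' = {}" if "s \<in> Slots" "s' \<in> Slots" "s \<noteq> s'" for s s'
  proof -
    have f1: "G (\<alpha> s) y = 0 \<or> G (\<alpha> s') y = 0" for y using \<alpha>3 that by blast
    have f2: "0 < 2 powr real_of_int (fst s)" by simp
    have f3: "0 < 2 powr real_of_int (fst s')" by simp
    show ?thesis
    proof (rule equals0I)
      fix y assume "y \<in> A s \<inter> A s'"
      hence y1: "2 powr real_of_int (fst s) < \<bar>G (\<alpha> s) y\<bar>" and y2: "2 powr real_of_int (fst s') < \<bar>G (\<alpha> s') y\<bar>"
        unfolding A_def by auto
      have "G (\<alpha> s) y \<noteq> 0" using y1 f2 by auto
      moreover have "G (\<alpha> s') y \<noteq> 0" using y2 f3 by auto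
      ultimately show False using f1[of y] by simp
    qed
  qed
  have eachA: "ennreal (coef s powr p * \<epsilon>) \<le> ennreal (c0 powr p) * wmu w (A s)" if s: "s \<in> Slots" for s
  proof -
    have "ennreal (c0 powr p) = ennreal (coef s powr p) * ennreal ((2 powr real_of_int (fst s)) powr p)"
    proof -
      have "c0 powr p = coef s powr p * (2 powr real_of_int (fst s)) powr p"
        unfolding coefm[of s, symmetric] by (rule powr_mult)
      thus ?thesis by (simp add: ennreal_mult'')
    qed
    hence "ennreal (c0 powr p) * wmu w (A s) = ennreal (coef s powr p) * lev p w (G (\<alpha> s)) (fst s)"
      unfolding lev_def A_def by (simp add: mult.assoc)
    moreover have "ennreal \<epsilon> \<le> lev p w (G (\<alpha> s)) (fst s)" using \<alpha>1 s unfolding Bm_def by blast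
    hence "ennreal (coef s powr p) * ennreal \<epsilon> \<le> ennreal (coef s powr p) * lev p w (G (\<alpha> s)) (fst s)"
      by (rule mult_left_mono) simp
    ultimately show ?thesis using \<epsilon>0 by (simp add: ennreal_mult'')
  qed
  have sumreal: "real L * \<epsilon> \<le> (\<Sum>s\<in>Slots. coef s powr p * \<epsilon>)"
  proof -
    have "(\<Sum>s\<in>Slots. coef s powr p * \<epsilon>) = (\<Sum>m\<in>Zs. \<Sum>j\<in>{..<nn m}. coef (m, j) powr p * \<epsilon>)"
      unfolding Slots_def using Zs(2) by (subst sum.Sigma) auto
    also have "\<dots> = (\<Sum>m\<in>Zs. real (nn m) * (2 powr (- real_of_int (m - m0))) powr p * \<epsilon>)"
      unfolding coef_def by (simp add: mult.assoc)
    also have "\<dots> \<ge> (\<Sum>m\<in>Zs. \<epsilon>)"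
    proof (rule sum_mono)
      fix m assume m: "m \<in> Zs"
      define x where "x = real_of_int (m - m0) * p"
      have "2 powr x \<le> real (nn m)"
      proof -
        have "2 powr x \<le> real_of_int \<lceil>2 powr x\<rceil>" by (rule le_of_int_ceiling)
        moreover have "(0::real) < real_of_int \<lceil>2 powr x\<rceil>"
          using le_of_int_ceiling[of "2 powr x"] powr_gt_zero[of 2 x] by linarith
        hence "0 < \<lceil>2 powr x\<rceil>" by (simp only: of_int_0_less_iff)
        hence "0 \<le> \<lceil>2 powr x\<rceil>" by (rule less_imp_le)
        ultimately show ?thesis unfolding nn_def x_def by simp
      qed
      moreover have "(2 powr (- real_of_int (m - m0))) powr p = 2 powr (- x)"
        unfolding x_def by (simp add: powr_powr algebra_simps)
      moreover have "2 powr x * 2 powr (- x) = 1" by (simp add: powr_add[symmetric])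
      ultimately have "1 \<le> real (nn m) * (2 powr (- real_of_int (m - m0))) powr p"
        by (metis mult_right_mono powr_ge_zero)
      thus "\<epsilon> \<le> real (nn m) * (2 powr (- real_of_int (m - m0))) powr p * \<epsilon>"
        using \<epsilon>0 by (simp add: mult_le_cancel_right1)
    qed
    also have "(\<Sum>m\<in>Zs. \<epsilon>) = real L * \<epsilon>" using Zs(3) by simp
    finally show ?thesis .
  qed
  have lower: "ennreal (real L * \<epsilon>) \<le> wnorm_p p w (T f)"
  proof -
    have "ennreal (real L * \<epsilon>) \<le> ennreal (\<Sum>s\<in>Slots. coef s powr p * \<epsilon>)"
      using sumreal by (rule ennreal_leI)
    also have "\<dots> = (\<Sum>s\<in>Slots. ennreal (coef s powr p * \<epsilon>))"
      using \<epsilon>0 by (simp add: sum_ennreal)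
    also have "\<dots> \<le> (\<Sum>s\<in>Slots. ennreal (c0 powr p) * wmu w (A s))"
      by (rule sum_mono) (rule eachA)
    also have "\<dots> = ennreal (c0 powr p) * (\<Sum>s\<in>Slots. wmu w (A s))"
      by (simp add: sum_distrib_left)
    also have "(\<Sum>s\<in>Slots. wmu w (A s)) = wmu w (\<Union>s\<in>Slots. A s)"
      by (rule wmu_disj_sum[OF finS Adisj])
    also have "ennreal (c0 powr p) * wmu w (\<Union>s\<in>Slots. A s) \<le> ennreal (c0 powr p) * wmu w {y. c0 < \<bar>T f y\<bar>}"
      using Asub by (intro mult_left_mono wmu_mono) auto
    also have "\<dots> \<le> wnorm_p p w (T f)" by (rule wnorm_ge[OF c00])
    finally show ?thesis .
  qed
  have upper: "wnorm_p p (\<lambda>_. 1) f \<le> ennreal 4"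
  proof (rule count_norm_le[OF fsupp])
    fix t :: real assume t: "0 < t"
    define Zt where "Zt = {m \<in> Zs. t < 2 powr (- real_of_int (m - m0))}"
    have fval: "f (\<alpha> s) = coef s" if "s \<in> Slots" for s
      unfolding f_def by (rule comb_eval[OF finS \<alpha>2 that])
    have f0: "f x = 0" if "x \<notin> \<alpha> ` Slots" for x
      unfolding f_def using that by (rule comb_eval0)
    have cpos: "0 < coef s" for s unfolding coef_def by simp
    have "{x. t < \<bar>f x\<bar>} = \<alpha> ` {s \<in> Slots. t < coef s}"
    proof (intro equalityI subsetI)
      fix x assume x: "x \<in> {x. t < \<bar>f x\<bar>}"
      hence "x \<in> \<alpha> ` Slots" using f0 t by force
      then obtain s where s: "s \<in> Slots" "x = \<alpha> s" by blast
      hence "t < coef s" using x fval[OF s(1)] cpos[of s] by simp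
      thus "x \<in> \<alpha> ` {s \<in> Slots. t < coef s}" using s by blast
    next
      fix x assume "x \<in> \<alpha> ` {s \<in> Slots. t < coef s}"
      then obtain s where s: "s \<in> Slots" "t < coef s" "x = \<alpha> s" by blast
      thus "x \<in> {x. t < \<bar>f x\<bar>}" using fval[OF s(1)] cpos[of s] by simp
    qed
    hence "card {x. t < \<bar>f x\<bar>} = card {s \<in> Slots. t < coef s}"
      using card_image[OF inj_on_subset[OF \<alpha>2]] by simp
    also have "{s \<in> Slots. t < coef s} = Sigma Zt (\<lambda>m. {..<nn m})"
      unfolding Slots_def Zt_def coef_def by auto
    also have "card (Sigma Zt (\<lambda>m. {..<nn m})) = (\<Sum>m\<in>Zt. nn m)"
      using Zs(2) unfolding Zt_def by (subst card_SigmaI) auto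
    finally have cardeq: "card {x. t < \<bar>f x\<bar>} = (\<Sum>m\<in>Zt. nn m)" .
    have "t powr p * real (\<Sum>m\<in>Zt. nat \<lceil>2 powr (real_of_int (m - m0) * p)\<rceil>) \<le> 4"
    proof (rule count_bound)
      show "finite Zt" unfolding Zt_def using Zs(2) by simp
      show "1 \<le> p" using p1 by simp
      show "0 < t" by (rule t)
      fix m assume "m \<in> Zt"
      thus "m0 \<le> m \<and> t < 2 powr (- real_of_int (m - m0))" unfolding Zt_def using m0le by auto
    qed
    thus "t powr p * real (card {x. t < \<bar>f x\<bar>}) \<le> 4" unfolding cardeq nn_def .
  qed
  have "ennreal (real L * \<epsilon>) \<le> ennreal (K powr p) * ennreal 4"
  proof -
    note lower
    also have "wnorm_p p w (T f) \<le> ennreal (K powr p) * wnorm_p p (\<lambda>_. 1) f" by (rule K[OF fD])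
    also have "\<dots> \<le> ennreal (K powr p) * ennreal 4" using upper by (rule mult_left_mono) simp
    finally show ?thesis .
  qed
  hence "ennreal (real L * \<epsilon>) \<le> ennreal (K powr p * 4)" by (simp add: ennreal_mult'')
  hence "real L * \<epsilon> \<le> K powr p * 4" by (subst (asm) ennreal_le_iff) simp_all
  thus False using LK by simp
qed

end


theorem proposition10:
  fixes p :: real
    and w :: "'g \<Rightarrow> real"
    and T :: "('a \<Rightarrow> real) \<Rightarrow> ('g \<Rightarrow> real)"
  assumes "1 < p"
    and "\<forall>x. 0 < w x"
    and "bounded_linear_wk p (\<lambda>_. 1) (mpinf p (\<lambda>_. 1)) w T"
  shows "countable {\<alpha>. T (indicator {\<alpha>}) \<notin> mpinf p w}"
  by (rule main_thm[OF assms])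

end
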